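(* Let $n$ be a positive integer. If two welded string links are $(2n+\mathrm{sv})$-equivalent, then they are $(V^{n}+\mathrm{sv})$-equivalent.
   Context: Welded string links: equivalence classes of ordered oriented string link diagrams whose double points are classical or virtual crossings, under welded Reidemeister moves R1–R3, V1–V4 and OC (welded isotopy). A $2n$-move replaces two parallel strands in a disk by two strands twisted with $2n$ consecutive classical crossings ($2n$ half-twists), or the inverse. A $V^n$-move: on two oriented strands in a disk, replace two parallel crossingless strands by a configuration where one strand passes under the other $n$ times consecutively at classical crossings of the same sign, crossing back via a virtual crossing after each (and the inverse). Self-crossing virtualization: replace a classical crossing between strands of the same component by a virtual one, or conversely. $(2n+\mathrm{sv})$-equivalence (resp. $(V^n+\mathrm{sv})$-equivalence) is generated by $2n$-moves (resp. $V^n$-moves), self-crossing virtualizations and welded isotopy. *)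

theory Defs
  imports Main "HOL-Library.Multiset"
begin

text \<open>Welded string links are modelled by Gauss diagrams: an ordered list of strands
(one word per component, read along the orientation), each word listing the endpoints of
the arrows (classical crossings) met along that strand.  An arrow goes from the
over-strand (tail) to the under-strand (head) and carries the sign of its crossing.
Virtual crossings are invisible in Gauss diagrams, which accounts for the moves V1-V4.\<close>

datatype ep = Ep (aname: nat) (is_tail: bool) (pos: bool)

type_synonym gdiag = "ep list list"

definition pm :: "bool \<Rightarrow> int" where
  "pm b = (if b then 1 else -1)"

definition names :: "gdiag \<Rightarrow> nat set" where
  "names D = aname ` set (concat D)"

definition wf_gd :: "gdiag \<Rightarrow> bool" where
  "wf_gd D \<longleftrightarrow> (\<forall>x \<in> names D. \<exists>s.
     filter (\<lambda>e. aname e = x) (concat D) \<in> {[Ep x True s, Ep x False s], [Ep x False s, Ep x True s]})"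

text \<open>Contexts: diagrams with holes (None); holes are filled in reading order with
segments.  A local move replaces the contents of some disjoint segments (arcs of
strands in a disk).\<close>
definition holes :: "ep option list \<Rightarrow> nat" where
  "holes w = length (filter (\<lambda>h. h = None) w)"

fun fillw :: "ep option list \<Rightarrow> ep list list \<Rightarrow> ep list" where
  "fillw [] ss = []"
| "fillw (Some e # w) ss = e # fillw w ss"
| "fillw (None # w) ss = hd ss @ fillw w (tl ss)"

fun fill :: "ep option list list \<Rightarrow> ep list list \<Rightarrow> gdiag" where
  "fill [] ss = []"
| "fill (w # ws) ss = fillw w ss # fill ws (drop (holes w) ss)"

definition local_move :: "(ep list list \<Rightarrow> ep list list \<Rightarrow> bool) \<Rightarrow> gdiag \<Rightarrow> gdiag \<Rightarrow> bool" where
  "local_move M D D' \<longleftrightarrow> wf_gd D \<and> wf_gd D' \<and>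
     (\<exists>C ss ss' ts ts'. M ss ss' \<and> length ss = length ss' \<and>
        length ts = length ss \<and> length ts' = length ss \<and>
        mset (zip ts ts') = mset (zip ss ss') \<and>
        sum_list (map holes C) = length ts \<and> D = fill C ts \<and> D' = fill C ts')"

definition R1 :: "ep list list \<Rightarrow> ep list list \<Rightarrow> bool" where
  "R1 ss ss' \<longleftrightarrow> (\<exists>x t s. ss = [[]] \<and> ss' = [[Ep x t s, Ep x (\<not> t) s]])"

definition R2 :: "ep list list \<Rightarrow> ep list list \<Rightarrow> bool" where
  "R2 ss ss' \<longleftrightarrow> (\<exists>x y s. ss = [[], []] \<and>
     (ss' = [[Ep x True s, Ep y True (\<not> s)], [Ep x False s, Ep y False (\<not> s)]] \<or>
      ss' = [[Ep x True s, Ep y True (\<not> s)], [Ep y False (\<not> s), Ep x False s]]))"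

text \<open>R3: three strands, 1 on top, 2 in the middle, 3 at the bottom; arrows x: 1->2,
y: 2->3, z: 1->3.  The parameters e1 e2 e3 encode the orientation of each strand
relative to the triangle and d the orientation of the triangle; the signs are
those realised by an actual triangle of three oriented straight strands.\<close>
definition R3 :: "ep list list \<Rightarrow> ep list list \<Rightarrow> bool" where
  "R3 ss ss' \<longleftrightarrow> (\<exists>x y z sx sy sz d e1 e2 e3.
     pm sx = pm d * pm e1 * pm e2 \<and> pm sy = pm d * pm e2 * pm e3 \<and>
     pm sz = - (pm d * pm e1 * pm e3) \<and>
     ss = [ (if e1 then [Ep z True sz, Ep x True sx] else [Ep x True sx, Ep z True sz]),
            (if e2 then [Ep x False sx, Ep y True sy] else [Ep y True sy, Ep x False sx]),
            (if e3 then [Ep y False sy, Ep z False sz] else [Ep z False sz, Ep y False sy]) ] \<and>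
     ss' = map rev ss)"

definition OC :: "ep list list \<Rightarrow> ep list list \<Rightarrow> bool" where
  "OC ss ss' \<longleftrightarrow> (\<exists>x y s t. ss = [[Ep x True s, Ep y True t]] \<and> ss' = [[Ep y True t, Ep x True s]])"

definition rename_step :: "gdiag \<Rightarrow> gdiag \<Rightarrow> bool" where
  "rename_step D D' \<longleftrightarrow> wf_gd D \<and> (\<exists>f. inj_on f (names D) \<and>
     D' = map (map (\<lambda>e. Ep (f (aname e)) (is_tail e) (pos e))) D)"

definition isotopy_step :: "gdiag \<Rightarrow> gdiag \<Rightarrow> bool" where
  "isotopy_step D D' \<longleftrightarrow> rename_step D D' \<or> local_move R1 D D' \<or> local_move R2 D D' \<or>
     local_move R3 D D' \<or> local_move OC D D'"

definition welded_isotopic :: "gdiag \<Rightarrow> gdiag \<Rightarrow> bool" where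
  "welded_isotopic = equivclp isotopy_step"

text \<open>Self-crossing virtualization: delete an arrow with both endpoints on one strand.\<close>
definition sv_step :: "gdiag \<Rightarrow> gdiag \<Rightarrow> bool" where
  "sv_step D D' \<longleftrightarrow> wf_gd D \<and> wf_gd D' \<and> (\<exists>i x. i < length D \<and>
     length (filter (\<lambda>e. aname e = x) (D ! i)) = 2 \<and>
     D' = D[i := filter (\<lambda>e. aname e \<noteq> x) (D ! i)])"

text \<open>2n-move: 2n consecutive classical crossings of the same sign between two strands,
alternately over and under (2n half-twists); the two strands are parallel or antiparallel.\<close>
definition twist_move :: "nat \<Rightarrow> ep list list \<Rightarrow> ep list list \<Rightarrow> bool" where
  "twist_move n ss ss' \<longleftrightarrow> (\<exists>xs c s rv. length xs = 2 * n \<and> ss = [[], []] \<and>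
     ss' = [ map (\<lambda>i. Ep (xs ! i) (c = even i) s) [0..<2 * n],
             (if rv then rev else id) (map (\<lambda>i. Ep (xs ! i) (c \<noteq> even i) s) [0..<2 * n]) ])"

text \<open>V^n-move: one strand passes n times under the other at classical crossings of the
same sign (the returns are virtual).  The order of the tails on the over-strand is left
arbitrary (it is immaterial modulo OC).\<close>
definition V_move :: "nat \<Rightarrow> ep list list \<Rightarrow> ep list list \<Rightarrow> bool" where
  "V_move n ss ss' \<longleftrightarrow> (\<exists>xs s Sb. length xs = n \<and> ss = [[], []] \<and>
     mset Sb = mset (map (\<lambda>x. Ep x True s) xs) \<and>
     ss' = [map (\<lambda>x. Ep x False s) xs, Sb])"

definition twon_sv_equiv :: "nat \<Rightarrow> gdiag \<Rightarrow> gdiag \<Rightarrow> bool" where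
  "twon_sv_equiv n = equivclp (\<lambda>D D'. isotopy_step D D' \<or> local_move (twist_move n) D D' \<or> sv_step D D')"

definition Vn_sv_equiv :: "nat \<Rightarrow> gdiag \<Rightarrow> gdiag \<Rightarrow> bool" where
  "Vn_sv_equiv n = equivclp (\<lambda>D D'. isotopy_step D D' \<or> local_move (V_move n) D D' \<or> sv_step D D')"

end

theory Submission
  imports Defs
begin

definition wfm :: "ep multiset \<Rightarrow> bool" where
  "wfm M \<longleftrightarrow> (\<forall>x \<in> aname ` set_mset M. \<exists>s. filter_mset (\<lambda>e. aname e = x) M = {#Ep x True s, Ep x False s#})"

lemma mset_two_iff: "mset l = {#a, b#} \<longleftrightarrow> l = [a, b] \<or> l = [b, a]"
proof
  assume h: "mset l = {#a, b#}"
  then have "length l = 2" by (metis size_mset size_add_mset size_empty One_nat_def numeral_2_eq_2)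
  then obtain u v where l: "l = [u, v]"
    by (metis (no_types, opaque_lifting) Suc_length_conv length_0_conv numeral_2_eq_2)
  with h show "l = [a, b] \<or> l = [b, a]"
    by (auto simp: add_eq_conv_ex)
qed auto

lemma wf_gd_mset: "wf_gd D \<longleftrightarrow> wfm (mset (concat D))"
  unfolding wf_gd_def wfm_def names_def
  by (simp add: mset_filter[symmetric] mset_two_iff del: mset_filter)

lemma wf_gd_cong: "mset (concat D) = mset (concat D') \<Longrightarrow> wf_gd D \<Longrightarrow> wf_gd D'"
  by (simp add: wf_gd_mset)

definition closedm :: "ep multiset \<Rightarrow> bool" where
  "closedm B \<longleftrightarrow> (\<forall>e \<in># B. Ep (aname e) (\<not> is_tail e) (pos e) \<in># B)"

lemma wfm_remove:
  assumes "wfm (A + B)" "closedm B"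
  shows "wfm A"
  unfolding wfm_def
proof
  fix x assume xA: "x \<in> aname ` set_mset A"
  from xA have "x \<in> aname ` set_mset (A + B)" by auto
  with assms(1) obtain s where fs: "filter_mset (\<lambda>e. aname e = x) (A + B) = {#Ep x True s, Ep x False s#}"
    unfolding wfm_def by blast
  have "filter_mset (\<lambda>e. aname e = x) B = {#}"
  proof (rule ccontr)
    assume "filter_mset (\<lambda>e. aname e = x) B \<noteq> {#}"
    then obtain e where eB: "e \<in># B" and ex: "aname e = x" by (auto simp: filter_mset_eq_mempty_iff)
    have "e \<in># filter_mset (\<lambda>e. aname e = x) (A + B)" using eB ex by auto
    then have "e \<in># {#Ep x True s, Ep x False s#}" by (simp only: fs)
    then have e2: "e = Ep x True s \<or> e = Ep x False s" by simp
    have pB: "Ep (aname e) (\<not> is_tail e) (pos e) \<in># B" using assms(2) eB unfolding closedm_def by blast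
    have "Ep x True s \<in># B" "Ep x False s \<in># B" using e2 eB pB by auto
    then have "{#Ep x True s, Ep x False s#} \<subseteq># filter_mset (\<lambda>e. aname e = x) B"
      by (auto simp: insert_subset_eq_iff in_diff_count)
    then have "size (filter_mset (\<lambda>e. aname e = x) B) \<ge> 2" using size_mset_mono by fastforce
    moreover have "size (filter_mset (\<lambda>e. aname e = x) A) \<ge> 1"
    proof -
      obtain e' where "e' \<in># A" "aname e' = x" using xA by auto
      then have "e' \<in># filter_mset (\<lambda>e. aname e = x) A" by simp
      then show ?thesis by (metis Suc_le_eq One_nat_def gr0I size_eq_0_iff_empty empty_iff set_mset_empty)
    qed
    moreover have "size (filter_mset (\<lambda>e. aname e = x) (A + B)) = 2" using fs by simp
    ultimately show False by simp
  qed
  then show "\<exists>s. filter_mset (\<lambda>e. aname e = x) A = {#Ep x True s, Ep x False s#}"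
    using fs by (simp del: filter_mset_eq_mempty_iff) blast
qed

lemma wfm_add:
  assumes "wfm A" "z \<notin> aname ` set_mset A"
  shows "wfm (A + {#Ep z True s, Ep z False s#})"
  unfolding wfm_def
proof
  fix x assume x: "x \<in> aname ` set_mset (A + {#Ep z True s, Ep z False s#})"
  show "\<exists>s'. filter_mset (\<lambda>e. aname e = x) (A + {#Ep z True s, Ep z False s#}) = {#Ep x True s', Ep x False s'#}"
  proof (cases "x = z")
    case True
    have "filter_mset (\<lambda>e. aname e = z) A = {#}" using assms(2) by auto
    then show ?thesis using True by (simp del: filter_mset_eq_mempty_iff) blast
  next
    case False
    then have "x \<in> aname ` set_mset A" using x by auto
    then obtain s' where "filter_mset (\<lambda>e. aname e = x) A = {#Ep x True s', Ep x False s'#}"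
      using assms(1) unfolding wfm_def by blast
    then show ?thesis using False by auto
  qed
qed

lemma holes_simps[simp]: "holes [] = 0" "holes (None # w) = Suc (holes w)" "holes (Some e # w) = holes w"
  "holes (w1 @ w2) = holes w1 + holes w2" "holes (map Some a) = 0"
  by (auto simp: holes_def)

lemma fillw_map_Some[simp]: "fillw (map Some a) ss = a"
  by (induction a) auto

lemma fillw_append[simp]: "fillw (w1 @ w2) ss = fillw w1 ss @ fillw w2 (drop (holes w1) ss)"
  by (induction w1 ss rule: fillw.induct) (auto simp: drop_Suc)

lemma fill_append[simp]: "fill (C1 @ C2) ss = fill C1 ss @ fill C2 (drop (sum_list (map holes C1)) ss)"
  by (induction C1 arbitrary: ss) (auto simp: add.commute)

lemma fill_nohole[simp]: "fill (map (map Some) D) ss = D"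
  by (induction D arbitrary: ss) auto

lemma sum_holes_nohole[simp]: "sum_list (map holes (map (map Some) D)) = 0"
  by (induction D) auto

lemma fill_upd1: "i < length D \<Longrightarrow> fill ((map (map Some) D)[i := X]) ts = D[i := fillw X ts]"
proof (induction D arbitrary: i)
  case (Cons d D)
  then show ?case by (cases i) auto
qed simp

lemma fill_upd2: "i < length D \<Longrightarrow> j < length D \<Longrightarrow> i \<noteq> j \<Longrightarrow>
  fill ((map (map Some) D)[i := X, j := Y]) ts =
   D[i := fillw X (if i < j then ts else drop (holes Y) ts), j := fillw Y (if i < j then drop (holes X) ts else ts)]"
proof (induction D arbitrary: i j ts)
  case (Cons d D)
  show ?case
  proof (cases i)
    case 0
    then obtain j' where "j = Suc j'" using Cons by (cases j) auto
    then show ?thesis using 0 Cons by (auto simp: fill_upd1)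
  next
    case (Suc i')
    show ?thesis
    proof (cases j)
      case 0
      then show ?thesis using Suc Cons by (auto simp: fill_upd1 list_update_swap)
    next
      case (Suc j')
      then show ?thesis using \<open>i = Suc i'\<close> Cons by auto
    qed
  qed
qed simp

lemma sum_holes_upd2: "i < length D \<Longrightarrow> j < length D \<Longrightarrow> i \<noteq> j \<Longrightarrow>
  sum_list (map holes ((map (map Some) D)[i := X, j := Y])) = holes X + holes Y"
proof (induction D arbitrary: i j)
  case (Cons d D)
  have h1: "\<And>k Z. k < length D \<Longrightarrow> sum_list (map holes ((map (map Some) D)[k := Z])) = holes Z"
  proof -
    fix k Z show "k < length D \<Longrightarrow> sum_list (map holes ((map (map Some) D)[k := Z])) = holes Z"
    proof (induction D arbitrary: k)
      case (Cons a D) then show ?case by (cases k) auto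
    qed simp
  qed
  show ?case
  proof (cases i)
    case 0
    then obtain j' where "j = Suc j'" using Cons by (cases j) auto
    then show ?thesis using 0 Cons h1 by auto
  next
    case (Suc i')
    show ?thesis
    proof (cases j)
      case 0
      then show ?thesis using Suc Cons h1 by auto
    next
      case (Suc j')
      then show ?thesis using \<open>i = Suc i'\<close> Cons by auto
    qed
  qed
qed simp

lemma mset_concat_upd: "i < length D \<Longrightarrow> mset (concat (D[i := w])) + mset (D ! i) = mset (concat D) + mset w"
proof (induction D arbitrary: i)
  case (Cons d D)
  then show ?case by (cases i) (auto simp: ac_simps)
qed simp

lemma mset_concat_upd_perm: "i < length D \<Longrightarrow> mset w = mset (D ! i) \<Longrightarrow> mset (concat (D[i := w])) = mset (concat D)"
  using mset_concat_upd[of i D w] by simp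

lemma set_nth_concat: "i < length D \<Longrightarrow> set (D ! i) \<subseteq> set (concat D)"
  using nth_mem by fastforce

lemma finite_names: "finite (names D)"
  by (simp add: names_def)

lemma sv_del:
  assumes wf: "wf_gd D" and i: "i < length D" and T: "Ep x True s \<in> set (D ! i)" and H: "Ep x False s \<in> set (D ! i)"
  shows "sv_step D (D[i := filter (\<lambda>e. aname e \<noteq> x) (D ! i)])"
proof -
  define B where "B = mset (filter (\<lambda>e. aname e = x) (D ! i))"
  define w' where "w' = filter (\<lambda>e. aname e \<noteq> x) (D ! i)"
  have split: "mset (D ! i) = mset w' + B" unfolding B_def w'_def
    by (metis mset_filter multiset_partition add.commute)
  have whole: "mset (concat D) = mset (concat (D[i := w'])) + B"
    using mset_concat_upd[OF i, of w'] split by (simp add: ac_simps)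
  have wm: "wfm (mset (concat D))" using wf by (simp add: wf_gd_mset)
  have "x \<in> aname ` set_mset (mset (concat D))" using T i by force
  then obtain s' where fs: "filter_mset (\<lambda>e. aname e = x) (mset (concat D)) = {#Ep x True s', Ep x False s'#}"
    using wm unfolding wfm_def by blast
  have fB: "filter_mset (\<lambda>e. aname e = x) B = B" unfolding B_def by (simp add: filter_filter_mset)
  have Bsub: "B \<subseteq># {#Ep x True s', Ep x False s'#}"
    unfolding fs[symmetric] whole filter_union_mset fB by simp
  have "Ep x True s \<in># B" "Ep x False s \<in># B" using T H by (auto simp: B_def)
  then have "Ep x True s \<in># {#Ep x True s', Ep x False s'#}" using Bsub by (meson mset_subset_eqD)
  then have ss: "s' = s" by auto
  have "{#Ep x True s, Ep x False s#} \<subseteq># B"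
    using \<open>Ep x True s \<in># B\<close> \<open>Ep x False s \<in># B\<close> by (auto simp: insert_subset_eq_iff in_diff_count)
  then have Beq: "B = {#Ep x True s, Ep x False s#}" using Bsub ss by (simp add: subset_mset.antisym)
  have cl: "closedm B" unfolding Beq closedm_def by auto
  have "wfm (mset (concat (D[i := w'])))" using wfm_remove[OF _ cl] wm whole by simp
  then have wf': "wf_gd (D[i := w'])" by (simp add: wf_gd_mset)
  have len: "length (filter (\<lambda>e. aname e = x) (D ! i)) = 2"
    using arg_cong[OF Beq, of size] unfolding B_def by (simp del: mset_filter add: mset_filter[symmetric])
  show ?thesis unfolding sv_step_def using wf wf' i len w'_def by blast
qed

lemma VE_sv: "sv_step D D' \<Longrightarrow> Vn_sv_equiv n D D'"
  unfolding Vn_sv_equiv_def by (rule r_into_equivclp) simp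
lemma VE_iso: "isotopy_step D D' \<Longrightarrow> Vn_sv_equiv n D D'"
  unfolding Vn_sv_equiv_def by (rule r_into_equivclp) simp
lemma VE_V: "local_move (V_move n) D D' \<Longrightarrow> Vn_sv_equiv n D D'"
  unfolding Vn_sv_equiv_def by (rule r_into_equivclp) simp
lemma VE_R3: "local_move R3 D D' \<Longrightarrow> Vn_sv_equiv n D D'"
  by (rule VE_iso) (simp add: isotopy_step_def)
lemma VE_sym: "Vn_sv_equiv n D D' \<Longrightarrow> Vn_sv_equiv n D' D"
  unfolding Vn_sv_equiv_def by (rule equivclp_sym)
lemma VE_trans [trans]: "Vn_sv_equiv n D D' \<Longrightarrow> Vn_sv_equiv n D' D'' \<Longrightarrow> Vn_sv_equiv n D D''"
  unfolding Vn_sv_equiv_def by (rule equivclp_trans)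
lemma VE_refl: "Vn_sv_equiv n D D"
  unfolding Vn_sv_equiv_def by simp

lemma local_moveI:
  "M ss ss' \<Longrightarrow> length ss' = length ss \<Longrightarrow> length ts = length ss \<Longrightarrow> length ts' = length ss \<Longrightarrow>
   mset (zip ts ts') = mset (zip ss ss') \<Longrightarrow> sum_list (map holes C) = length ts \<Longrightarrow>
   wf_gd (fill C ts) \<Longrightarrow> wf_gd (fill C ts') \<Longrightarrow> local_move M (fill C ts) (fill C ts')"
  unfolding local_move_def by metis

lemma two_split:
  assumes "x \<in> set l" "y \<in> set l" "x \<noteq> y"
  shows "\<exists>u v w. l = u @ [x] @ v @ [y] @ w \<or> l = u @ [y] @ v @ [x] @ w"
proof -
  obtain l1 l2 where l: "l = l1 @ x # l2" using assms(1) by (meson split_list)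
  then have "y \<in> set l1 \<or> y \<in> set l2" using assms by auto
  then show ?thesis
  proof
    assume "y \<in> set l1"
    then obtain m1 m2 where "l1 = m1 @ y # m2" by (meson split_list)
    then show ?thesis using l by auto
  next
    assume "y \<in> set l2"
    then obtain m1 m2 where "l2 = m1 @ y # m2" by (meson split_list)
    then show ?thesis using l by auto
  qed
qed

lemma upd_same_neq: "i \<noteq> j \<Longrightarrow> D[i := X, j := D ! j] = D[i := X]"
  by (metis list_update_id nth_list_update_neq)

lemma exch:
  assumes wf: "wf_gd D" and i: "i < length D" and j: "j < length D" and ij: "i \<noteq> j"
    and Di: "D ! i = p @ [Ep a True sa, Ep b False sb] @ q"
    and haj: "Ep a False sa \<in> set (D ! j)" and tbj: "Ep b True sb \<in> set (D ! j)"
  shows "Vn_sv_equiv n D (D[i := p @ [Ep b False sb, Ep a True sa] @ q])"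
proof -
  obtain z where z: "z \<notin> names D" using finite_names ex_new_if_finite infinite_UNIV_nat by blast
  define sz where "sz = (sa \<noteq> sb)"
  define tz where "tz = Ep z True sz"
  define hz where "hz = Ep z False sz"
  define ha where "ha = Ep a False sa"
  define tb where "tb = Ep b True sb"
  define ta where "ta = Ep a True sa"
  define hb where "hb = Ep b False sb"
  define S1 where "S1 = (if \<not> sb then [tz, tb] else [tb, tz])"
  define S3 where "S3 = (if \<not> sa then [ha, hz] else [hz, ha])"
  define \<sigma> where "\<sigma> g = (if g = ha then S3 else S1)" for g
  have hatb: "ha \<noteq> tb" by (simp add: ha_def tb_def)
  obtain u v w g1 g2 where Dj: "D ! j = u @ [g1] @ v @ [g2] @ w"
    and gg: "(g1 = ha \<and> g2 = tb) \<or> (g1 = tb \<and> g2 = ha)"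
    using two_split[OF haj tbj] hatb unfolding ha_def tb_def by blast
  have zj: "\<forall>e\<in>set (D ! j). aname e \<noteq> z" using z set_nth_concat[OF j] unfolding names_def by blast
  then have zu: "\<forall>e\<in>set u. aname e \<noteq> z" "\<forall>e\<in>set v. aname e \<noteq> z" "\<forall>e\<in>set w. aname e \<noteq> z"
    "aname g1 \<noteq> z" "aname g2 \<noteq> z" using Dj by auto
  define Wz where "Wz = u @ \<sigma> g1 @ v @ \<sigma> g2 @ w"
  define W1 where "W1 = u @ rev (\<sigma> g1) @ v @ rev (\<sigma> g2) @ w"
  define Dz where "Dz = D[j := Wz]"
  define D1 where "D1 = Dz[i := p @ [hb, ta] @ q, j := W1]"
  have fWz: "filter (\<lambda>e. aname e \<noteq> z) Wz = D ! j"
    using gg zu unfolding Wz_def Dj \<sigma>_def S1_def S3_def tz_def hz_def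
    by (auto simp: filter_id_conv)
  have fW1: "filter (\<lambda>e. aname e \<noteq> z) W1 = D ! j"
    using gg zu unfolding W1_def Dj \<sigma>_def S1_def S3_def tz_def hz_def
    by (auto simp: filter_id_conv)
  have mWz: "mset Wz = mset (D ! j) + {#tz, hz#}"
    using gg hatb unfolding Wz_def Dj \<sigma>_def S1_def S3_def by auto
  have mW1: "mset W1 = mset Wz" unfolding W1_def Wz_def by simp
  have lenDz: "length Dz = length D" by (simp add: Dz_def)
  have mDz: "mset (concat Dz) = mset (concat D) + {#tz, hz#}"
    using mset_concat_upd[OF j, of Wz] mWz unfolding Dz_def by (simp add: ac_simps)
  have "z \<notin> aname ` set_mset (mset (concat D))" using z by (simp add: names_def)
  then have wfDz: "wf_gd Dz" using wfm_add wf mDz unfolding wf_gd_mset tz_def hz_def by metis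
  have Dzi: "Dz ! i = p @ [ta, hb] @ q" using Di ij by (simp add: Dz_def ta_def hb_def)
  have Dzj: "Dz ! j = Wz" using j by (simp add: Dz_def)
  have tzW: "tz \<in> set Wz" "hz \<in> set Wz" "tz \<in> set W1" "hz \<in> set W1"
    using gg hatb unfolding Wz_def W1_def \<sigma>_def S1_def S3_def by auto
  have sv1: "sv_step Dz D"
  proof -
    have "sv_step Dz (Dz[j := filter (\<lambda>e. aname e \<noteq> z) (Dz ! j)])"
      using sv_del[OF wfDz, of j z sz] j tzW Dzj by (simp add: lenDz tz_def hz_def)
    also have "Dz[j := filter (\<lambda>e. aname e \<noteq> z) (Dz ! j)] = D"
      using Dzj fWz by (simp add: Dz_def)
    finally show ?thesis .
  qed
  have mD1: "mset (concat D1) = mset (concat Dz)"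
  proof -
    have "mset (concat (Dz[i := p @ [hb, ta] @ q])) = mset (concat Dz)"
      by (rule mset_concat_upd_perm) (use i Dzi in \<open>auto simp: lenDz\<close>)
    moreover have "mset (concat (Dz[i := p @ [hb, ta] @ q, j := W1])) = mset (concat (Dz[i := p @ [hb, ta] @ q]))"
      by (rule mset_concat_upd_perm) (use j ij Dzj mW1 in \<open>auto simp: lenDz\<close>)
    ultimately show ?thesis by (simp add: D1_def)
  qed
  have wfD1: "wf_gd D1" using wf_gd_cong[OF mD1[symmetric] wfDz] .
  have lenD1: "length D1 = length D" by (simp add: D1_def lenDz)
  have D1j: "D1 ! j = W1" using j by (simp add: D1_def lenDz)
  have sv2: "sv_step D1 (D[i := p @ [hb, ta] @ q])"
  proof -
    have "sv_step D1 (D1[j := filter (\<lambda>e. aname e \<noteq> z) (D1 ! j)])"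
      using sv_del[OF wfD1, of j z sz] j tzW D1j by (simp add: lenD1 tz_def hz_def)
    also have "D1[j := filter (\<lambda>e. aname e \<noteq> z) (D1 ! j)] = D[i := p @ [hb, ta] @ q]"
      using D1j fW1 ij by (simp add: D1_def Dz_def list_update_swap upd_same_neq)
    finally show ?thesis .
  qed
  define Xc where "Xc = map Some p @ None # map Some q"
  define Yc where "Yc = map Some u @ None # map Some v @ None # map Some w"
  define C where "C = (map (map Some) Dz)[i := Xc, j := Yc]"
  define ts where "ts = (if i < j then [[ta, hb], \<sigma> g1, \<sigma> g2] else [\<sigma> g1, \<sigma> g2, [ta, hb]])"
  define ts' where "ts' = (if i < j then [[hb, ta], rev (\<sigma> g1), rev (\<sigma> g2)] else [rev (\<sigma> g1), rev (\<sigma> g2), [hb, ta]])"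
  have fC: "fill C ts = Dz"
  proof -
    have "fill C ts = Dz[i := p @ [ta, hb] @ q, j := Wz]"
      unfolding C_def using i j ij
      by (simp add: fill_upd2 lenDz Xc_def Yc_def ts_def Wz_def)
    also have "\<dots> = Dz" using Dzi Dzj by (metis list_update_id)
    finally show ?thesis .
  qed
  have fC': "fill C ts' = D1"
    unfolding C_def D1_def using i j ij
    by (simp add: fill_upd2 lenDz Xc_def Yc_def ts'_def W1_def)
  have sC: "sum_list (map holes C) = length ts"
    unfolding C_def using i j ij by (simp add: sum_holes_upd2 lenDz Xc_def Yc_def ts_def)
  define ss where "ss = [S1, [ta, hb], S3]"
  have R3ss: "R3 ss (map rev ss)"
    unfolding R3_def
    apply (rule exI[of _ b], rule exI[of _ a], rule exI[of _ z])
    apply (rule exI[of _ sb], rule exI[of _ sa], rule exI[of _ sz])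
    apply (rule exI[of _ True], rule exI[of _ "\<not> sb"], rule exI[of _ False], rule exI[of _ "\<not> sa"])
    by (cases sa; cases sb) (simp_all add: pm_def sz_def ss_def S1_def S3_def ta_def hb_def tz_def hz_def ha_def tb_def)
  have mz: "mset (zip ts ts') = mset (zip ss (map rev ss))"
    using gg hatb unfolding ts_def ts'_def ss_def \<sigma>_def by (auto simp: add_mset_commute)
  have lm: "local_move R3 Dz D1"
  proof -
    have "local_move R3 (fill C ts) (fill C ts')"
      by (rule local_moveI[of R3 ss "map rev ss"]) (use R3ss mz sC wfDz wfD1 fC fC' in \<open>simp_all add: ts_def ts'_def ss_def\<close>)
    then show ?thesis using fC fC' by simp
  qed
  have "Vn_sv_equiv n D Dz" by (rule VE_sym, rule VE_sv, rule sv1)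
  also have "Vn_sv_equiv n Dz D1" by (rule VE_R3, rule lm)
  also have "Vn_sv_equiv n D1 (D[i := p @ [hb, ta] @ q])" by (rule VE_sv, rule sv2)
  finally show ?thesis by (simp add: hb_def ta_def)
qed

definition okp :: "ep set \<Rightarrow> ep \<Rightarrow> ep \<Rightarrow> bool" where
  "okp S x y \<longleftrightarrow> (is_tail x \<and> \<not> is_tail y \<and> Ep (aname x) False (pos x) \<in> S \<and> Ep (aname y) True (pos y) \<in> S) \<or>
                 (is_tail y \<and> \<not> is_tail x \<and> Ep (aname y) False (pos y) \<in> S \<and> Ep (aname x) True (pos x) \<in> S)"

definition swp :: "ep set \<Rightarrow> ep list \<Rightarrow> ep list \<Rightarrow> bool" where
  "swp S w w' \<longleftrightarrow> (\<exists>p q x y. w = p @ [x, y] @ q \<and> w' = p @ [y, x] @ q \<and> okp S x y)"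

lemma swp_mset: "swp S w w' \<Longrightarrow> mset w' = mset w"
  unfolding swp_def by auto

lemma swp_star_mset: "(swp S)\<^sup>*\<^sup>* w w' \<Longrightarrow> mset w' = mset w"
  by (induction rule: rtranclp_induct) (auto dest: swp_mset)

lemma swp_step:
  assumes wf: "wf_gd D" and i: "i < length D" and j: "j < length D" and ij: "i \<noteq> j"
    and S: "set (D ! j) = S" and sw: "swp S (D ! i) w'"
  shows "Vn_sv_equiv n D (D[i := w'])"
proof -
  obtain p q x y where w: "D ! i = p @ [x, y] @ q" and w': "w' = p @ [y, x] @ q" and ok: "okp S x y"
    using sw unfolding swp_def by blast
  from ok show ?thesis unfolding okp_def
  proof
    assume h: "is_tail x \<and> \<not> is_tail y \<and> Ep (aname x) False (pos x) \<in> S \<and> Ep (aname y) True (pos y) \<in> S"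
    have x: "x = Ep (aname x) True (pos x)" and y: "y = Ep (aname y) False (pos y)"
      using h by (metis ep.collapse)+
    have "D ! i = p @ [Ep (aname x) True (pos x), Ep (aname y) False (pos y)] @ q" using w x y by simp
    from exch[OF wf i j ij this] h S show ?thesis using w' x y by simp
  next
    assume h: "is_tail y \<and> \<not> is_tail x \<and> Ep (aname y) False (pos y) \<in> S \<and> Ep (aname x) True (pos x) \<in> S"
    have y: "y = Ep (aname y) True (pos y)" and x: "x = Ep (aname x) False (pos x)"
      using h by (metis ep.collapse)+
    define D' where "D' = D[i := w']"
    have "mset (concat (D[i := w'])) = mset (concat D)"
      by (rule mset_concat_upd_perm) (use i w w' in auto)
    then have wf': "wf_gd D'" unfolding D'_def using wf_gd_cong wf by metis
    have D'i: "D' ! i = p @ [Ep (aname y) True (pos y), Ep (aname x) False (pos x)] @ q"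
      using i w' x y by (simp add: D'_def)
    have "set (D' ! j) = S" using S ij by (simp add: D'_def)
    from exch[OF wf' _ _ ij D'i] h this i j
    have "Vn_sv_equiv n D' (D'[i := p @ [Ep (aname x) False (pos x), Ep (aname y) True (pos y)] @ q])"
      by (simp add: D'_def)
    also have "D'[i := p @ [Ep (aname x) False (pos x), Ep (aname y) True (pos y)] @ q] = D"
      using x y w by (simp add: D'_def) (metis list_update_id)
    finally show ?thesis using D'_def VE_sym by blast
  qed
qed

lemma swp_star:
  assumes st: "(swp S)\<^sup>*\<^sup>* (D ! i) w'"
    and wf: "wf_gd D" and i: "i < length D" and j: "j < length D" and ij: "i \<noteq> j"
    and S: "set (D ! j) = S"
  shows "Vn_sv_equiv n D (D[i := w'])"
  using st
proof (induction rule: rtranclp_induct)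
  case base
  then show ?case by (simp add: VE_refl)
next
  case (step w1 w2)
  have m: "mset w1 = mset (D ! i)" using step.hyps(1) by (rule swp_star_mset)
  have "mset (concat (D[i := w1])) = mset (concat D)"
    by (rule mset_concat_upd_perm) (use i m in auto)
  then have wf1: "wf_gd (D[i := w1])" using wf_gd_cong wf by metis
  have "Vn_sv_equiv n (D[i := w1]) (D[i := w1, i := w2])"
    by (rule swp_step[OF wf1 _ _ ij]) (use i j ij S step.hyps(2) in auto)
  then show ?case using step.IH by (simp add: VE_trans)
qed

lemma swp_ctx: "swp S w w' \<Longrightarrow> swp S (l @ w @ r) (l @ w' @ r)"
  unfolding swp_def by (metis append.assoc)

lemma swp_star_ctx: "(swp S)\<^sup>*\<^sup>* w w' \<Longrightarrow> (swp S)\<^sup>*\<^sup>* (l @ w @ r) (l @ w' @ r)"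
  by (induction rule: rtranclp_induct) (auto intro: rtranclp.rtrancl_into_rtrancl swp_ctx)

lemma move_head:
  assumes "\<forall>t\<in>set T. okp S x t"
  shows "(swp S)\<^sup>*\<^sup>* (x # T @ H) (T @ x # H)"
  using assms
proof (induction T)
  case (Cons t T)
  have "swp S (x # t # T @ H) (t # x # T @ H)"
    unfolding swp_def using Cons.prems
    by (intro exI[of _ "[]"] exI[of _ "T @ H"] exI[of _ x] exI[of _ t]) auto
  moreover have "(swp S)\<^sup>*\<^sup>* ([t] @ (x # T @ H) @ []) ([t] @ (T @ x # H) @ [])"
    by (rule swp_star_ctx) (use Cons in auto)
  ultimately show ?case by (simp add: converse_rtranclp_into_rtranclp)
qed simp

lemma sort_tails:
  assumes "\<forall>x\<in>set l. \<forall>y\<in>set l. is_tail x \<noteq> is_tail y \<longrightarrow> okp S x y"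
  shows "(swp S)\<^sup>*\<^sup>* l (filter is_tail l @ filter (\<lambda>e. \<not> is_tail e) l)"
  using assms
proof (induction l)
  case (Cons x l)
  then have IH: "(swp S)\<^sup>*\<^sup>* l (filter is_tail l @ filter (\<lambda>e. \<not> is_tail e) l)" by auto
  have c: "(swp S)\<^sup>*\<^sup>* ([x] @ l @ []) ([x] @ (filter is_tail l @ filter (\<lambda>e. \<not> is_tail e) l) @ [])"
    by (rule swp_star_ctx[OF IH])
  show ?case
  proof (cases "is_tail x")
    case True
    then show ?thesis using c by simp
  next
    case False
    have "(swp S)\<^sup>*\<^sup>* (x # filter is_tail l @ filter (\<lambda>e. \<not> is_tail e) l) (filter is_tail l @ x # filter (\<lambda>e. \<not> is_tail e) l)"
      by (rule move_head) (use Cons.prems False in auto)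
    then show ?thesis using c False by (simp add: rtranclp_trans)
  qed
qed simp

lemma okp_from_partner:
  assumes "\<forall>e\<in>set X. Ep (aname e) (\<not> is_tail e) (pos e) \<in> S"
  shows "\<forall>x\<in>set X. \<forall>y\<in>set X. is_tail x \<noteq> is_tail y \<longrightarrow> okp S x y"
  using assms unfolding okp_def by (metis (full_types) ep.collapse)

lemma holes_comp_Some[simp]: "sum_list (map (holes \<circ> map Some) P) = 0"
  by (induction P) auto

lemma core:
  assumes wf0: "wf_gd (P @ [a1 @ a2] @ M @ [b1 @ b2] @ R)"
    and wf1: "wf_gd (P @ [a1 @ X @ a2] @ M @ [b1 @ Y @ b2] @ R)"
    and pX: "\<forall>e\<in>set X. Ep (aname e) (\<not> is_tail e) (pos e) \<in> set Y"
    and pY: "\<forall>e\<in>set Y. Ep (aname e) (\<not> is_tail e) (pos e) \<in> set X"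
    and sg: "\<forall>e\<in>set X \<union> set Y. pos e = s"
    and lX: "length (filter (\<lambda>e. \<not> is_tail e) X) = n"
    and lY: "length (filter (\<lambda>e. \<not> is_tail e) Y) = n"
    and mX: "mset (filter is_tail X) = mset (map (\<lambda>e. Ep (aname e) True s) (filter (\<lambda>e. \<not> is_tail e) Y))"
    and mY: "mset (filter is_tail Y) = mset (map (\<lambda>e. Ep (aname e) True s) (filter (\<lambda>e. \<not> is_tail e) X))"
  shows "Vn_sv_equiv n (P @ [a1 @ a2] @ M @ [b1 @ b2] @ R) (P @ [a1 @ X @ a2] @ M @ [b1 @ Y @ b2] @ R)"
proof -
  define tX where "tX = filter is_tail X"
  define hX where "hX = filter (\<lambda>e. \<not> is_tail e) X"
  define tY where "tY = filter is_tail Y"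
  define hY where "hY = filter (\<lambda>e. \<not> is_tail e) Y"
  define i where "i = length P"
  define j where "j = Suc (length P + length M)"
  define D' where "D' = P @ [a1 @ X @ a2] @ M @ [b1 @ Y @ b2] @ R"
  define D1 where "D1 = P @ [a1 @ (tX @ hX) @ a2] @ M @ [b1 @ Y @ b2] @ R"
  define D2 where "D2 = P @ [a1 @ tX @ hX @ a2] @ M @ [b1 @ (tY @ hY) @ b2] @ R"
  define D3 where "D3 = P @ [a1 @ hX @ a2] @ M @ [b1 @ tY @ b2] @ R"
  define D0 where "D0 = P @ [a1 @ a2] @ M @ [b1 @ b2] @ R"
  have ij: "i \<noteq> j" "i < length D'" "j < length D'" "i < length D1" "j < length D1"
    by (auto simp: i_def j_def D'_def D1_def)
  have D'i: "D' ! i = a1 @ X @ a2" and D'j: "D' ! j = b1 @ Y @ b2"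
    by (simp_all add: D'_def i_def j_def nth_append)
  have D1i: "D1 ! i = a1 @ (tX @ hX) @ a2" and D1j: "D1 ! j = b1 @ Y @ b2"
    by (simp_all add: D1_def i_def j_def nth_append)
  have up1: "D'[i := a1 @ (tX @ hX) @ a2] = D1"
    by (simp add: D'_def D1_def i_def list_update_append)
  have up2: "D1[j := b1 @ (tY @ hY) @ b2] = D2"
    by (simp add: D1_def D2_def j_def list_update_append)
  have stA: "(swp (set (D' ! j)))\<^sup>*\<^sup>* (D' ! i) (a1 @ (tX @ hX) @ a2)"
    unfolding D'i tX_def hX_def
    by (rule swp_star_ctx, rule sort_tails, rule okp_from_partner) (use pX D'j in auto)
  have A: "Vn_sv_equiv n D' D1"
    using swp_star[OF stA _ ij(2) ij(3) ij(1) refl] wf1 up1 by (simp add: D'_def)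
  have mD1: "mset (concat D1) = mset (concat D')"
    by (simp add: D1_def D'_def tX_def hX_def)
  have wfD1: "wf_gd D1" using wf_gd_cong[OF mD1[symmetric]] wf1 by (simp add: D'_def)
  have stB: "(swp (set (D1 ! i)))\<^sup>*\<^sup>* (D1 ! j) (b1 @ (tY @ hY) @ b2)"
  proof -
    have "set (D1 ! i) = set (a1 @ X @ a2)" by (auto simp: D1i tX_def hX_def)
    then show ?thesis
      unfolding D1j tY_def hY_def
      by (intro swp_star_ctx sort_tails okp_from_partner) (use pY in auto)
  qed
  have B: "Vn_sv_equiv n D1 D2"
    using swp_star[OF stB wfD1 ij(5) ij(4) ij(1)[symmetric] refl] up2 by simp
  have mD2: "mset (concat D2) = mset (concat D1)"
    by (simp add: D1_def D2_def tY_def hY_def)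
  have wfD2: "wf_gd D2" using wf_gd_cong[OF mD2[symmetric] wfD1] .
  have mD23: "mset (concat D2) = mset (concat D3) + (mset tX + mset hY)"
    by (simp add: D2_def D3_def ac_simps)
  have cl1: "closedm (mset tX + mset hY)"
    unfolding closedm_def
  proof
    fix e assume "e \<in># mset tX + mset hY"
    then consider "e \<in> set X" "is_tail e" | "e \<in> set Y" "\<not> is_tail e" by (auto simp: tX_def hY_def)
    then show "Ep (aname e) (\<not> is_tail e) (pos e) \<in># mset tX + mset hY"
    proof cases
      case 1
      then have "Ep (aname e) (\<not> is_tail e) (pos e) \<in> set Y" using pX by blast
      then show ?thesis using 1 by (simp add: hY_def)
    next
      case 2
      then have "Ep (aname e) (\<not> is_tail e) (pos e) \<in> set X" using pY by blast
      then show ?thesis using 2 by (simp add: tX_def)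
    qed
  qed
  have wfD3: "wf_gd D3"
    using wfm_remove[OF _ cl1] wfD2 mD23 by (simp add: wf_gd_mset)
  have hYe: "map (\<lambda>x. Ep x False s) (map aname hY) = hY"
  proof -
    have "\<forall>e\<in>set hY. Ep (aname e) False s = e"
    proof
      fix e assume "e \<in> set hY"
      then have "e \<in> set Y" "\<not> is_tail e" by (auto simp: hY_def)
      then have "pos e = s" "\<not> is_tail e" using sg by auto
      then show "Ep (aname e) False s = e" by (cases e) simp
    qed
    then show ?thesis by (simp add: map_idI)
  qed
  have hXe: "map (\<lambda>x. Ep x False s) (map aname hX) = hX"
  proof -
    have "\<forall>e\<in>set hX. Ep (aname e) False s = e"
    proof
      fix e assume "e \<in> set hX"
      then have "e \<in> set X" "\<not> is_tail e" by (auto simp: hX_def)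
      then have "pos e = s" "\<not> is_tail e" using sg by auto
      then show "Ep (aname e) False s = e" by (cases e) simp
    qed
    then show ?thesis by (simp add: map_idI)
  qed
  have Vm1: "V_move n [[], []] [hY, tX]"
    unfolding V_move_def
    by (rule exI[of _ "map aname hY"], rule exI[of _ s], rule exI[of _ tX])
       (use hYe lY mX in \<open>simp add: hY_def tX_def o_def\<close>)
  have Vm2: "V_move n [[], []] [hX, tY]"
    unfolding V_move_def
    by (rule exI[of _ "map aname hX"], rule exI[of _ s], rule exI[of _ tY])
       (use hXe lX mY in \<open>simp add: hX_def tY_def o_def\<close>)
  define C3 where "C3 = map (map Some) P @ [map Some a1 @ None # map Some (hX @ a2)] @ map (map Some) M
     @ [map Some (b1 @ tY) @ None # map Some b2] @ map (map Some) R"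
  have fC3: "fill C3 [[], []] = D3" "fill C3 [tX, hY] = D2"
    by (simp_all add: C3_def D3_def D2_def)
  have sC3: "sum_list (map holes C3) = 2" by (simp add: C3_def)
  have lm1: "local_move (V_move n) D3 D2"
  proof -
    have "local_move (V_move n) (fill C3 [[], []]) (fill C3 [tX, hY])"
      by (rule local_moveI[of "V_move n" "[[], []]" "[hY, tX]"], rule Vm1) (use sC3 fC3 wfD2 wfD3 in \<open>simp_all add: add_mset_commute\<close>)
    then show ?thesis using fC3 by simp
  qed
  define C0 where "C0 = map (map Some) P @ [map Some a1 @ None # map Some a2] @ map (map Some) M
     @ [map Some b1 @ None # map Some b2] @ map (map Some) R"
  have fC0: "fill C0 [[], []] = D0" "fill C0 [hX, tY] = D3"
    by (simp_all add: C0_def D3_def D0_def)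
  have sC0: "sum_list (map holes C0) = 2" by (simp add: C0_def)
  have lm2: "local_move (V_move n) D0 D3"
  proof -
    have "local_move (V_move n) (fill C0 [[], []]) (fill C0 [hX, tY])"
      by (rule local_moveI[of "V_move n" "[[], []]" "[hX, tY]"], rule Vm2) (use sC0 fC0 wf0 wfD3 D0_def in \<open>simp_all\<close>)
    then show ?thesis using fC0 by simp
  qed
  have "Vn_sv_equiv n D0 D3" by (rule VE_V[OF lm2])
  also have "Vn_sv_equiv n D3 D2" by (rule VE_V[OF lm1])
  also have "Vn_sv_equiv n D2 D1" by (rule VE_sym[OF B])
  also have "Vn_sv_equiv n D1 D'" by (rule VE_sym[OF A])
  finally show ?thesis by (simp add: D0_def D'_def)
qed

definition hyp :: "nat \<Rightarrow> bool \<Rightarrow> ep list \<Rightarrow> ep list \<Rightarrow> bool" where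
  "hyp n s X Y \<longleftrightarrow> (\<forall>e\<in>set X. Ep (aname e) (\<not> is_tail e) (pos e) \<in> set Y) \<and>
     (\<forall>e\<in>set Y. Ep (aname e) (\<not> is_tail e) (pos e) \<in> set X) \<and>
     (\<forall>e\<in>set X \<union> set Y. pos e = s) \<and>
     length (filter (\<lambda>e. \<not> is_tail e) X) = n \<and> length (filter (\<lambda>e. \<not> is_tail e) Y) = n \<and>
     mset (filter is_tail X) = mset (map (\<lambda>e. Ep (aname e) True s) (filter (\<lambda>e. \<not> is_tail e) Y)) \<and>
     mset (filter is_tail Y) = mset (map (\<lambda>e. Ep (aname e) True s) (filter (\<lambda>e. \<not> is_tail e) X))"

lemma hyp_sym: "hyp n s X Y \<Longrightarrow> hyp n s Y X"
  unfolding hyp_def by auto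

lemma hyp_rev: "hyp n s X Y \<Longrightarrow> hyp n s (rev X) Y"
proof -
  assume h: "hyp n s X Y"
  have "filter P (rev X) = rev (filter P X)" for P by (simp add: rev_filter)
  then show ?thesis using h unfolding hyp_def by (simp only: set_rev length_rev rev_map[symmetric] mset_rev) blast
qed

definition Wd :: "nat list \<Rightarrow> bool \<Rightarrow> bool \<Rightarrow> nat \<Rightarrow> ep list" where
  "Wd xs c s n = map (\<lambda>i. Ep (xs ! i) (c = even i) s) [0..<2 * n]"

lemma len_even: "length (filter (\<lambda>i. b = even i) [0..<2 * n]) = n"
proof (induction n)
  case (Suc n)
  have "[0..<2 * Suc n] = [0..<2 * n] @ [2 * n, Suc (2 * n)]" by simp
  then show ?case using Suc by auto
qed simp

lemma fT: "filter is_tail (map (\<lambda>i. Ep (xs ! i) (c = even i) s) L) = map (\<lambda>i. Ep (xs ! i) True s) (filter (\<lambda>i. c = even i) L)"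
  by (induction L) auto

lemma fH: "filter (\<lambda>e. \<not> is_tail e) (map (\<lambda>i. Ep (xs ! i) (c = even i) s) L) = map (\<lambda>i. Ep (xs ! i) False s) (filter (\<lambda>i. (\<not> c) = even i) L)"
  by (induction L) auto

lemma hyp_W: "hyp n s (Wd xs c s n) (Wd xs (\<not> c) s n)"
proof -
  have p1: "\<forall>e\<in>set (Wd xs c s n). Ep (aname e) (\<not> is_tail e) (pos e) \<in> set (Wd xs (\<not> c) s n)"
    unfolding Wd_def by force
  have p2: "\<forall>e\<in>set (Wd xs (\<not> c) s n). Ep (aname e) (\<not> is_tail e) (pos e) \<in> set (Wd xs c s n)"
    unfolding Wd_def by force
  have sg: "\<forall>e\<in>set (Wd xs c s n) \<union> set (Wd xs (\<not> c) s n). pos e = s"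
    unfolding Wd_def by auto
  have l1: "length (filter (\<lambda>e. \<not> is_tail e) (Wd xs c s n)) = n"
    unfolding Wd_def fH by (simp add: len_even)
  have l2: "length (filter (\<lambda>e. \<not> is_tail e) (Wd xs (\<not> c) s n)) = n"
    unfolding Wd_def fH using len_even[of c n] by simp
  have m1: "mset (filter is_tail (Wd xs c s n)) = mset (map (\<lambda>e. Ep (aname e) True s) (filter (\<lambda>e. \<not> is_tail e) (Wd xs (\<not> c) s n)))"
    unfolding Wd_def fT fH by (simp add: o_def)
  have m2: "mset (filter is_tail (Wd xs (\<not> c) s n)) = mset (map (\<lambda>e. Ep (aname e) True s) (filter (\<lambda>e. \<not> is_tail e) (Wd xs c s n)))"
    unfolding Wd_def fT fH by (simp add: o_def)
  show ?thesis unfolding hyp_def using p1 p2 sg l1 l2 m1 m2 by blast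
qed

lemma core':
  assumes "hyp n s X Y" "wf_gd (P @ [a1 @ a2] @ M @ [b1 @ b2] @ R)"
    "wf_gd (P @ [a1 @ X @ a2] @ M @ [b1 @ Y @ b2] @ R)"
  shows "Vn_sv_equiv n (P @ [a1 @ a2] @ M @ [b1 @ b2] @ R) (P @ [a1 @ X @ a2] @ M @ [b1 @ Y @ b2] @ R)"
  using assms unfolding hyp_def by (intro core) auto

lemma sv_iter:
  "distinct ns \<Longrightarrow> wf_gd D \<Longrightarrow> i < length D \<Longrightarrow>
   (\<forall>x\<in>set ns. \<exists>s. Ep x True s \<in> set (D ! i) \<and> Ep x False s \<in> set (D ! i)) \<Longrightarrow>
   Vn_sv_equiv n D (D[i := filter (\<lambda>e. aname e \<notin> set ns) (D ! i)])"
proof (induction ns arbitrary: D)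
  case Nil
  then show ?case by (simp add: VE_refl)
next
  case (Cons x ns)
  obtain s where s: "Ep x True s \<in> set (D ! i)" "Ep x False s \<in> set (D ! i)" using Cons.prems by auto
  define D1 where "D1 = D[i := filter (\<lambda>e. aname e \<noteq> x) (D ! i)]"
  have sv: "sv_step D D1" unfolding D1_def by (rule sv_del[OF Cons.prems(2) Cons.prems(3) s])
  then have wf1: "wf_gd D1" unfolding sv_step_def by blast
  have D1i: "D1 ! i = filter (\<lambda>e. aname e \<noteq> x) (D ! i)" using Cons.prems(3) by (simp add: D1_def)
  have "\<forall>y\<in>set ns. \<exists>s. Ep y True s \<in> set (D1 ! i) \<and> Ep y False s \<in> set (D1 ! i)"
    using Cons.prems(1,4) unfolding D1i by auto
  then have "Vn_sv_equiv n D1 (D1[i := filter (\<lambda>e. aname e \<notin> set ns) (D1 ! i)])"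
    using Cons.IH[OF _ wf1] Cons.prems by (simp add: D1_def)
  also have "D1[i := filter (\<lambda>e. aname e \<notin> set ns) (D1 ! i)] = D[i := filter (\<lambda>e. aname e \<notin> set (x # ns)) (D ! i)]"
    unfolding D1i by (simp add: D1_def conj_commute)
  finally show ?case using VE_sv[OF sv] VE_trans by blast
qed

lemma fresh_part:
  assumes wf: "wf_gd D" and m: "mset (concat D) = A + B"
    and T: "Ep x True s \<in># B" and H: "Ep x False s \<in># B" and e: "e \<in># A"
  shows "aname e \<noteq> x"
proof
  assume ex: "aname e = x"
  have wm: "wfm (A + B)" using wf m by (simp add: wf_gd_mset)
  have "x \<in> aname ` set_mset (A + B)" using T by force
  then obtain s' where fs: "filter_mset (\<lambda>e. aname e = x) (A + B) = {#Ep x True s', Ep x False s'#}"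
    using wm unfolding wfm_def by blast
  have "{#Ep x True s, Ep x False s#} \<subseteq># filter_mset (\<lambda>e. aname e = x) B"
    using T H by (auto simp: insert_subset_eq_iff in_diff_count)
  then have "size (filter_mset (\<lambda>e. aname e = x) B) \<ge> 2" using size_mset_mono by fastforce
  moreover have "size (filter_mset (\<lambda>e. aname e = x) A) \<ge> 1"
  proof -
    have "e \<in># filter_mset (\<lambda>e. aname e = x) A" using e ex by simp
    then show ?thesis by (metis Suc_le_eq One_nat_def gr0I size_eq_0_iff_empty empty_iff set_mset_empty)
  qed
  moreover have "size (filter_mset (\<lambda>e. aname e = x) (A + B)) = 2" using fs by simp
  ultimately show False by simp
qed

lemma sameword:
  assumes wf0: "wf_gd (P @ [a @ b @ c] @ R)" and wf1: "wf_gd (P @ [a @ X @ b @ Y @ c] @ R)"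
    and pX: "\<forall>e\<in>set X. Ep (aname e) (\<not> is_tail e) (pos e) \<in> set Y"
    and pY: "\<forall>e\<in>set Y. Ep (aname e) (\<not> is_tail e) (pos e) \<in> set X"
  shows "Vn_sv_equiv n (P @ [a @ b @ c] @ R) (P @ [a @ X @ b @ Y @ c] @ R)"
proof -
  define D' where "D' = P @ [a @ X @ b @ Y @ c] @ R"
  define i where "i = length P"
  define ns where "ns = remdups (map aname (X @ Y))"
  have i: "i < length D'" by (simp add: i_def D'_def)
  have D'i: "D' ! i = a @ X @ b @ Y @ c" by (simp add: i_def D'_def)
  have both: "\<exists>s. Ep x True s \<in> set (X @ Y) \<and> Ep x False s \<in> set (X @ Y)" if "x \<in> set ns" for x
  proof -
    have "x \<in> aname ` set (X @ Y)" using that by (auto simp: ns_def)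
    then obtain e where e: "e \<in> set (X @ Y)" "aname e = x" by blast
    have p: "Ep (aname e) (\<not> is_tail e) (pos e) \<in> set (X @ Y)" using e pX pY by auto
    have ee: "e = Ep (aname e) (is_tail e) (pos e)" by simp
    show ?thesis
    proof (cases "is_tail e")
      case True
      then show ?thesis using e p ee by (intro exI[of _ "pos e"]) (metis)
    next
      case False
      then show ?thesis using e p ee by (intro exI[of _ "pos e"]) (metis)
    qed
  qed
  have "Vn_sv_equiv n D' (D'[i := filter (\<lambda>e. aname e \<notin> set ns) (D' ! i)])"
    by (rule sv_iter) (use i wf1 D'i both in \<open>auto simp: ns_def D'_def\<close>)
  moreover have "D'[i := filter (\<lambda>e. aname e \<notin> set ns) (D' ! i)] = P @ [a @ b @ c] @ R"
  proof -
    have mm: "mset (concat D') = mset (concat (P @ [a @ b @ c] @ R)) + (mset X + mset Y)"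
      by (simp add: D'_def ac_simps)
    have fr: "aname e \<notin> set ns" if "e \<in> set (concat (P @ [a @ b @ c] @ R))" for e
    proof
      assume "aname e \<in> set ns"
      then obtain s where "Ep (aname e) True s \<in> set (X @ Y)" "Ep (aname e) False s \<in> set (X @ Y)" using both by blast
      then show False
        using fresh_part[OF wf1[folded D'_def] mm, of "aname e" s e] that by auto
    qed
    have "filter (\<lambda>e. aname e \<notin> set ns) (a @ X @ b @ Y @ c) = a @ b @ c"
      using fr by (auto simp: ns_def filter_id_conv filter_empty_conv)
    then show ?thesis using D'i by (simp add: D'_def i_def)
  qed
  ultimately show ?thesis unfolding D'_def using VE_sym by metis
qed

lemma holes0: "holes w = 0 \<Longrightarrow> map Some (map the w) = w"
proof (induction w)
  case (Cons x w) then show ?case by (cases x) auto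
qed simp

lemma holes_Suc: "holes w = Suc k \<Longrightarrow> \<exists>a w'. w = map Some a @ None # w' \<and> holes w' = k"
proof (induction w)
  case (Cons x w)
  show ?case
  proof (cases x)
    case None then show ?thesis using Cons.prems by (intro exI[of _ "[]"] exI[of _ w]) auto
  next
    case (Some e)
    then obtain a w' where "w = map Some a @ None # w'" "holes w' = k" using Cons by auto
    then show ?thesis using Some by (intro exI[of _ "e # a"]) auto
  qed
qed simp

lemma C_split: "sum_list (map holes C) = Suc k \<Longrightarrow>
  \<exists>P w R. C = P @ w # R \<and> sum_list (map holes P) = 0 \<and> holes w + sum_list (map holes R) = Suc k \<and> 0 < holes w"
proof (induction C)
  case (Cons c C)
  show ?case
  proof (cases "holes c = 0")
    case True
    then obtain P w R where "C = P @ w # R" "sum_list (map holes P) = 0" "holes w + sum_list (map holes R) = Suc k" "0 < holes w"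
      using Cons by auto
    then show ?thesis using True by (intro exI[of _ "c # P"]) auto
  next
    case False
    then show ?thesis using Cons.prems by (intro exI[of _ "[]"] exI[of _ c] exI[of _ C]) auto
  qed
qed simp

lemma nohole_list: "sum_list (map holes P) = 0 \<Longrightarrow> map (map Some) (map (map the) P) = P"
proof (induction P)
  case (Cons a P)
  then have "holes a = 0" "sum_list (map holes P) = 0" by auto
  then show ?case using Cons.IH holes0 by (simp del: map_map)
qed simp

lemma hole1: "holes w = 1 \<Longrightarrow> \<exists>a b. w = map Some a @ None # map Some b"
  using holes_Suc[of w 0] holes0 by (metis One_nat_def)

lemma hole2: "holes w = 2 \<Longrightarrow> \<exists>a b c. w = map Some a @ None # map Some b @ None # map Some c"
  using holes_Suc[of w 1] hole1 by (metis Suc_1)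

lemma two_mset: "{#a, b#} = {#c, d#} \<Longrightarrow> (a = c \<and> b = d) \<or> (a = d \<and> b = c)"
  by (metis add_mset_eq_single add_eq_conv_diff)

lemma len2: "length l = 2 \<Longrightarrow> \<exists>a b. l = [a, b]"
  by (cases l; cases "tl l") auto

lemma twist_VE:
  assumes lm: "local_move (twist_move n) D D'"
  shows "Vn_sv_equiv n D D'"
proof -
  obtain C ss ss' ts ts' where tw: "twist_move n ss ss'" and l1: "length ss = length ss'"
    and l2: "length ts = length ss" and l3: "length ts' = length ss"
    and mz: "mset (zip ts ts') = mset (zip ss ss')" and sh: "sum_list (map holes C) = length ts"
    and D: "D = fill C ts" and D': "D' = fill C ts'" and wf: "wf_gd D" "wf_gd D'"
    using lm unfolding local_move_def by (elim conjE exE) (rule that, assumption+)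
  obtain xs c s rv where ss: "ss = [[], []]"
    and ss'0: "ss' = [map (\<lambda>i. Ep (xs ! i) (c = even i) s) [0..<2 * n],
             (if rv then rev else id) (map (\<lambda>i. Ep (xs ! i) (c \<noteq> even i) s) [0..<2 * n])]"
    using tw unfolding twist_move_def by blast
  have ss': "ss' = [Wd xs c s n, (if rv then rev else id) (Wd xs (\<not> c) s n)]"
  proof -
    have "map (\<lambda>i. Ep (xs ! i) (c \<noteq> even i) s) [0..<2 * n] = Wd xs (\<not> c) s n"
      unfolding Wd_def by (rule map_cong) auto
    then show ?thesis using ss'0 by (simp only: Wd_def)
  qed
  define W1 where "W1 = Wd xs c s n"
  define W2 where "W2 = (if rv then rev else id) (Wd xs (\<not> c) s n)"
  have h12: "hyp n s W1 W2"
  proof (cases rv)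
    case True
    have "hyp n s (rev (Wd xs (\<not> c) s n)) (Wd xs c s n)"
      by (rule hyp_rev, rule hyp_sym, rule hyp_W)
    then have "hyp n s (Wd xs c s n) (rev (Wd xs (\<not> c) s n))" by (rule hyp_sym)
    then show ?thesis using True unfolding W1_def W2_def by simp
  next
    case False
    then show ?thesis using hyp_W[of n s xs c] unfolding W1_def W2_def by simp
  qed
  have h21: "hyp n s W2 W1" using hyp_sym[OF h12] .
  obtain t1 t2 where ts: "ts = [t1, t2]" using len2[of ts] l2 ss by auto
  obtain t1' t2' where ts': "ts' = [t1', t2']" using len2[of ts'] l3 ss by auto
  have "{#(t1, t1'), (t2, t2')#} = {#([], W1), ([], W2)#}"
    using mz unfolding ts ts' ss ss' W1_def W2_def by simp
  then have "((t1, t1') = ([], W1) \<and> (t2, t2') = ([], W2)) \<or> ((t1, t1') = ([], W2) \<and> (t2, t2') = ([], W1))"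
    by (rule two_mset)
  then have tt: "t1 = []" "t2 = []" and hh: "hyp n s t1' t2'"
    using h12 h21 by auto
  have s2: "sum_list (map holes C) = Suc 1" using sh ts by simp
  obtain P w R where C: "C = P @ w # R" and hP: "sum_list (map holes P) = 0"
    and hw: "holes w + sum_list (map holes R) = Suc 1" and w0: "0 < holes w"
    using C_split[OF s2] by blast
  define P' where "P' = map (map the) P"
  have P: "P = map (map Some) P'" using nohole_list[OF hP] by (simp add: P'_def)
  show ?thesis
  proof (cases "holes w = 2")
    case True
    then have hR: "sum_list (map holes R) = 0" using hw by simp
    define R' where "R' = map (map the) R"
    have R: "R = map (map Some) R'" using nohole_list[OF hR] by (simp add: R'_def)
    obtain a b c' where w: "w = map Some a @ None # map Some b @ None # map Some c'" using hole2[OF True] by blast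
    have DD: "D = P' @ [a @ b @ c'] @ R'" using D unfolding C P R w ts tt by simp
    have DD': "D' = P' @ [a @ t1' @ b @ t2' @ c'] @ R'" using D' unfolding C P R w ts' by simp
    have pX: "\<forall>e\<in>set t1'. Ep (aname e) (\<not> is_tail e) (pos e) \<in> set t2'"
      and pY: "\<forall>e\<in>set t2'. Ep (aname e) (\<not> is_tail e) (pos e) \<in> set t1'"
      using hh unfolding hyp_def by blast+
    show ?thesis unfolding DD DD'
      by (rule sameword[OF wf(1)[unfolded DD] wf(2)[unfolded DD'] pX pY])
  next
    case False
    then have hw1: "holes w = 1" and hR: "sum_list (map holes R) = Suc 0" using hw w0 by auto
    obtain Q w' R2 where R: "R = Q @ w' # R2" and hQ: "sum_list (map holes Q) = 0"
      and hw': "holes w' + sum_list (map holes R2) = Suc 0" and w'0: "0 < holes w'"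
      using C_split[OF hR] by blast
    have hw'1: "holes w' = 1" and hR2: "sum_list (map holes R2) = 0" using hw' w'0 by linarith+
    define Q' where "Q' = map (map the) Q"
    have Q: "Q = map (map Some) Q'" using nohole_list[OF hQ] by (simp add: Q'_def)
    define R2' where "R2' = map (map the) R2"
    have R2: "R2 = map (map Some) R2'" using nohole_list[OF hR2] by (simp add: R2'_def)
    obtain a1 a2 where w: "w = map Some a1 @ None # map Some a2" using hole1[OF hw1] by blast
    obtain b1 b2 where w': "w' = map Some b1 @ None # map Some b2" using hole1[OF hw'1] by blast
    have DD: "D = P' @ [a1 @ a2] @ Q' @ [b1 @ b2] @ R2'" using D unfolding C P R Q R2 w w' ts tt by simp
    have DD': "D' = P' @ [a1 @ t1' @ a2] @ Q' @ [b1 @ t2' @ b2] @ R2'" using D' unfolding C P R Q R2 w w' ts' by simp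
    show ?thesis unfolding DD DD'
      by (rule core'[OF hh wf(1)[unfolded DD] wf(2)[unfolded DD']])
  qed
qed

theorem proposition5p1:
  fixes n :: nat and D1 D2 :: gdiag
  assumes "0 < n" and "wf_gd D1" and "wf_gd D2"
    and "twon_sv_equiv n D1 D2"
  shows "Vn_sv_equiv n D1 D2"
proof -
  have r: "Vn_sv_equiv n y z" if "isotopy_step y z \<or> local_move (twist_move n) y z \<or> sv_step y z" for y z
    using that VE_iso VE_sv twist_VE by blast
  from assms(4) show ?thesis unfolding twon_sv_equiv_def
  proof (induction rule: equivclp_induct)
    case base
    then show ?case by (rule VE_refl)
  next
    case (step y z)
    then show ?case using r VE_sym VE_trans by blast
  qed
qed

end
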